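(* Let $d\ge 1$, let $|\cdot|$ be any norm on $\mathbb{R}^d$, let $p\in(0,+\infty)$ and let $X$ be an $\mathbb{R}^d$-valued random vector with $\mathbb{E}|X|^p<+\infty$ and distribution $\mu$. For a subset $\Gamma\subset\mathbb{R}^d$ and $r>0$ put $e_r(\Gamma,X)=\big(\mathbb{E}\, d(X,\Gamma)^r\big)^{1/r}$, where $d(\xi,\Gamma)=\inf_{a\in\Gamma}|\xi-a|$ (with $d(\xi,\emptyset)=+\infty$). For a sequence $(a_N)_{N\ge1}$ write $a^{(N)}=\{a_1,\dots,a_N\}$ and $a^{(0)}=\emptyset$. (a) (Existence) There exists at least one sequence $(a_N)_{N\ge 1}$ of points of $\mathbb{R}^d$ such that for every $N\ge 0$, $$a_{N+1}\in\operatorname{argmin}_{\xi\in\mathbb{R}^d} e_p\big(a^{(N)}\cup\{\xi\},X\big)$$ (such a sequence is called an $L^p$-optimal greedy quantization sequence); in particular $a_1$ minimizes $\xi\mapsto\mathbb{E}|X-\xi|^p$ (an $L^p$-median of $\mu$). Moreover, for any such sequence and any integer $N\le \operatorname{card}(\operatorname{supp}(\mu))$, the finite sequence $\big(e_p(a^{(n)},X)\big)_{1\le n\le N}$ is strictly decreasing; in particular $a_n\notin a^{(n-1)}$ for $n\in\{1,\dots,N\}$. (b) (Local optimality) Let $(a_N)_{N\ge1}$ be an $L^p$-optimal greedy quantization sequence and let $N\le\operatorname{card}(\operatorname{supp}(\mu))$. Set $$C_{a_N}(a^{(N)})=\Big\{\xi\in\mathbb{R}^d:\ |\xi-a_N|<\min_{1\le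 i\le N-1}|\xi-a_i|\Big\},\qquad W_{a_N}(a^{(N)})=\Big\{\xi\in\mathbb{R}^d:\ |\xi-a_N|\le\min_{1\le i\le N-1}|\xi-a_i|\Big\}$$ (with the minimum over an empty index set equal to $+\infty$). Then $\mu\big(C_{a_N}(a^{(N)})\big)>0$, and for every Borel set $C$ with $C_{a_N}(a^{(N)})\subset C\subset W_{a_N}(a^{(N)})$, $$a_N\in\operatorname{argmin}_{a\in\mathbb{R}^d}\mathbb{E}\big(|X-a|^p\,\big|\,X\in C\big).$$ (c) (Space filling) Assume moreover $\mathbb{E}|X|^q<+\infty$ for some $q\ge p$. Then every $L^p$-optimal greedy quantization sequence $(a_N)_{N\ge1}$ satisfies $\lim_{N\to+\infty}e_q(a^{(N)},X)=0$, i.e. $\lim_{N\to+\infty}\int_{\mathbb{R}^d}\min_{1\le i\le N}|\xi-a_i|^q\,\mu(d\xi)=0$. In particular $\lim_N e_p(a^{(N)},X)=0$.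
   Context: $\operatorname{supp}(\mu)$ denotes the (topological) support of the distribution $\mu$ and $\operatorname{card}$ its cardinality (possibly infinite). *)

theory Defs
  imports "HOL-Analysis.Analysis" "HOL-Probability.Probability"
begin

text \<open>An arbitrary norm on the Euclidean space 'a (a copy of R^d, d = DIM('a) >= 1).\<close>
definition is_norm :: "('a::euclidean_space \<Rightarrow> real) \<Rightarrow> bool" where
  "is_norm nrm \<longleftrightarrow>
     (\<forall>x. 0 \<le> nrm x) \<and> (\<forall>x. nrm x = 0 \<longleftrightarrow> x = 0) \<and>
     (\<forall>c x. nrm (c *\<^sub>R x) = \<bar>c\<bar> * nrm x) \<and>
     (\<forall>x y. nrm (x + y) \<le> nrm x + nrm y)"

definition enn_powr :: "ennreal \<Rightarrow> real \<Rightarrow> ennreal" where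
  "enn_powr x r = (if x = \<infinity> then \<infinity> else ennreal (enn2real x powr r))"

definition dist_set :: "('a::euclidean_space \<Rightarrow> real) \<Rightarrow> 'a \<Rightarrow> 'a set \<Rightarrow> ennreal" where
  "dist_set nrm \<xi> \<Gamma> = (INF a\<in>\<Gamma>. ennreal (nrm (\<xi> - a)))"

definition quant_err :: "('a::euclidean_space \<Rightarrow> real) \<Rightarrow> 'a measure \<Rightarrow> real \<Rightarrow> 'a set \<Rightarrow> ennreal" where
  "quant_err nrm \<mu> r \<Gamma> = enn_powr (\<integral>\<^sup>+ \<xi>. enn_powr (dist_set nrm \<xi> \<Gamma>) r \<partial>\<mu>) (1 / r)"

text \<open>a^(N) = {a_1, ..., a_N}; a^(0) is empty (index 0 of the sequence is unused).\<close>
definition first_pts :: "(nat \<Rightarrow> 'a) \<Rightarrow> nat \<Rightarrow> 'a set" where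
  "first_pts a N = a ` {1..N}"

definition greedy_seq :: "('a::euclidean_space \<Rightarrow> real) \<Rightarrow> 'a measure \<Rightarrow> real \<Rightarrow> (nat \<Rightarrow> 'a) \<Rightarrow> bool" where
  "greedy_seq nrm \<mu> p a \<longleftrightarrow>
     (\<forall>N. \<forall>\<xi>. quant_err nrm \<mu> p (first_pts a N \<union> {a (Suc N)})
                \<le> quant_err nrm \<mu> p (first_pts a N \<union> {\<xi>}))"

definition support :: "'a::topological_space measure \<Rightarrow> 'a set" where
  "support \<mu> = {x. \<forall>U. open U \<longrightarrow> x \<in> U \<longrightarrow> emeasure \<mu> U > 0}"

text \<open>N <= card(S), where card may be infinite.\<close>
definition le_card :: "nat \<Rightarrow> 'a set \<Rightarrow> bool" where
  "le_card N S \<longleftrightarrow> (finite S \<longrightarrow> N \<le> card S)"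

definition open_cell :: "('a::euclidean_space \<Rightarrow> real) \<Rightarrow> (nat \<Rightarrow> 'a) \<Rightarrow> nat \<Rightarrow> 'a set" where
  "open_cell nrm a N = {\<xi>. \<forall>i\<in>{1..<N}. nrm (\<xi> - a N) < nrm (\<xi> - a i)}"

definition closed_cell :: "('a::euclidean_space \<Rightarrow> real) \<Rightarrow> (nat \<Rightarrow> 'a) \<Rightarrow> nat \<Rightarrow> 'a set" where
  "closed_cell nrm a N = {\<xi>. \<forall>i\<in>{1..<N}. nrm (\<xi> - a N) \<le> nrm (\<xi> - a i)}"

definition cond_exp_set :: "'a measure \<Rightarrow> ('a \<Rightarrow> ennreal) \<Rightarrow> 'a set \<Rightarrow> ennreal" where
  "cond_exp_set \<mu> f C = (\<integral>\<^sup>+ x\<in>C. f x \<partial>\<mu>) / emeasure \<mu> C"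

end

theory Submission imports Defs begin

primrec Gs :: "('a set \<Rightarrow> 'a) \<Rightarrow> nat \<Rightarrow> 'a set" where
  "Gs pk 0 = {}"
| "Gs pk (Suc n) = Gs pk n \<union> {pk (Gs pk n)}"

lemma Gs_fin: "finite (Gs pk n)" by (induction n) auto

locale qs =
  fixes nrm :: "'a::euclidean_space \<Rightarrow> real" and \<mu> :: "'a measure"
  assumes nrm: "is_norm nrm" and prob: "prob_space \<mu>" and sb: "sets \<mu> = sets borel"
begin

lemma nrm_nonneg: "0 \<le> nrm x" using nrm unfolding is_norm_def by auto
lemma nrm_zero_iff: "nrm x = 0 \<longleftrightarrow> x = 0" using nrm unfolding is_norm_def by auto
lemma nrm_scale: "nrm (c *\<^sub>R x) = \<bar>c\<bar> * nrm x" using nrm unfolding is_norm_def by auto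
lemma nrm_tri: "nrm (x + y) \<le> nrm x + nrm y" using nrm unfolding is_norm_def by auto
lemma nrm_0[simp]: "nrm 0 = 0" using nrm_zero_iff by simp
lemma nrm_minus: "nrm (- x) = nrm x" using nrm_scale[of "-1" x] by simp
lemma nrm_commute: "nrm (x - y) = nrm (y - x)" using nrm_minus[of "x - y"] by simp
lemma nrm_pos: "x \<noteq> 0 \<Longrightarrow> 0 < nrm x" using nrm_nonneg[of x] nrm_zero_iff[of x] by linarith
lemma nrm_tri_diff: "nrm (x - z) \<le> nrm (x - y) + nrm (y - z)"
  using nrm_tri[of "x - y" "y - z"] by simp
lemma nrm_rev: "nrm x - nrm y \<le> nrm (x - y)"
  using nrm_tri[of "x - y" y] by simp
lemma nrm_sum: "finite S \<Longrightarrow> nrm (\<Sum>i\<in>S. f i) \<le> (\<Sum>i\<in>S. nrm (f i))"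
  by (induction S rule: finite_induct) (auto intro: order_trans[OF nrm_tri])

lemma nrm_upper: "nrm x \<le> (\<Sum>b\<in>Basis. nrm b) * norm x"
proof -
  have "nrm x = nrm (\<Sum>b\<in>Basis. (x \<bullet> b) *\<^sub>R b)" by (simp add: euclidean_representation)
  also have "\<dots> \<le> (\<Sum>b\<in>Basis. nrm ((x \<bullet> b) *\<^sub>R b))" by (rule nrm_sum) simp
  also have "\<dots> = (\<Sum>b\<in>Basis. \<bar>x \<bullet> b\<bar> * nrm b)" by (simp add: nrm_scale)
  also have "\<dots> \<le> (\<Sum>b\<in>Basis. norm x * nrm b)"
    by (rule sum_mono) (simp add: Basis_le_norm mult_right_mono nrm_nonneg)
  finally show ?thesis by (simp add: sum_distrib_left mult.commute)
qed

lemma nrm_cont: "continuous_on UNIV nrm"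
proof -
  let ?C = "(\<Sum>b\<in>Basis. nrm b)"
  have "lipschitz_on ?C UNIV nrm"
  proof (rule lipschitz_onI)
    fix x y :: 'a
    have "\<bar>nrm x - nrm y\<bar> \<le> nrm (x - y)" using nrm_rev[of x y] nrm_rev[of y x] nrm_commute[of x y] by linarith
    also have "\<dots> \<le> ?C * norm (x - y)" by (rule nrm_upper)
    finally show "dist (nrm x) (nrm y) \<le> ?C * dist x y" by (simp add: dist_norm dist_real_def)
  next
    show "0 \<le> ?C" by (simp add: sum_nonneg nrm_nonneg)
  qed
  thus ?thesis by (rule lipschitz_on_continuous_on)
qed

lemma nrm_isCont: "isCont nrm x"
  using nrm_cont by (simp add: continuous_on_eq_continuous_at)

lemma nrm_meas[measurable]: "nrm \<in> borel_measurable borel"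
  by (rule borel_measurable_continuous_onI[OF nrm_cont])

lemma nrm_lower: "\<exists>c>0. \<forall>x. c * norm x \<le> nrm x"
proof -
  obtain b :: 'a where b: "b \<in> Basis" using nonempty_Basis by blast
  have ne: "sphere (0::'a) 1 \<noteq> {}" using b by (auto intro!: exI[of _ b])
  obtain x0 where x0: "x0 \<in> sphere 0 1" "\<forall>y\<in>sphere 0 1. nrm x0 \<le> nrm y"
    using continuous_attains_inf[OF compact_sphere ne continuous_on_subset[OF nrm_cont]] by auto
  have "x0 \<noteq> 0" using x0 by auto
  hence c: "0 < nrm x0" by (rule nrm_pos)
  have "nrm x0 * norm x \<le> nrm x" for x
  proof (cases "x = 0")
    case False
    hence "(1 / norm x) *\<^sub>R x \<in> sphere 0 1" by simp
    hence "nrm x0 \<le> nrm ((1 / norm x) *\<^sub>R x)" using x0 by auto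
    also have "\<dots> = nrm x / norm x" by (simp add: nrm_scale)
    finally show ?thesis using False by (simp add: field_simps)
  qed simp
  thus ?thesis using c by (auto simp: mult.commute)
qed

definition md :: "real \<Rightarrow> 'a set \<Rightarrow> 'a \<Rightarrow> ennreal" where
  "md r G x = (INF g\<in>G. ennreal (nrm (x - g) powr r))"

definition J :: "real \<Rightarrow> 'a set \<Rightarrow> ennreal" where
  "J r G = (\<integral>\<^sup>+ x. md r G x \<partial>\<mu>)"

lemma md_empty[simp]: "md r {} x = \<infinity>" by (simp add: md_def)
lemma md_insert: "md r (insert g G) x = min (ennreal (nrm (x - g) powr r)) (md r G x)"
  by (simp add: md_def inf_min)
lemma md_Un1: "md r (G \<union> {g}) x = min (ennreal (nrm (x - g) powr r)) (md r G x)"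
  using md_insert by simp
lemma md_single: "md r {g} x = ennreal (nrm (x - g) powr r)" by (simp add: md_def)
lemma md_le: "g \<in> G \<Longrightarrow> md r G x \<le> ennreal (nrm (x - g) powr r)"
  unfolding md_def by (rule INF_lower)
lemma md_anti: "G \<subseteq> H \<Longrightarrow> md r H x \<le> md r G x"
  unfolding md_def by (rule INF_superset_mono) auto

lemma md_meas: "finite G \<Longrightarrow> md r G \<in> borel_measurable borel"
proof (induction G rule: finite_induct)
  case empty
  then show ?case by (simp add: md_def)
next
  case (insert g G)
  have "md r (insert g G) = (\<lambda>x. min (ennreal (nrm (x - g) powr r)) (md r G x))"
    by (rule ext) (rule md_insert)
  have "(\<lambda>x. ennreal (nrm (x - g) powr r)) \<in> borel_measurable borel" by measurable
  then show ?case unfolding \<open>md r (insert g G) = _\<close> using insert.IH by (intro borel_measurable_min)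
qed

lemma meas_mu: "borel_measurable \<mu> = borel_measurable borel"
  by (rule measurable_cong_sets[OF sb refl])

lemma md_meas_mu: "finite G \<Longrightarrow> md r G \<in> borel_measurable \<mu>"
  using md_meas meas_mu by auto

lemma space_mu: "space \<mu> = UNIV"
  using sets_eq_imp_space_eq[OF sb] by simp

lemma sets_mu: "sets \<mu> = sets borel" by (rule sb)

lemma emeasure_UNIV: "emeasure \<mu> UNIV = 1"
  using prob_space.emeasure_space_1[OF prob] space_mu by simp

lemma J_anti: "G \<subseteq> H \<Longrightarrow> J r H \<le> J r G"
  unfolding J_def by (rule nn_integral_mono) (rule md_anti)

lemma enn_powr_mono: "0 \<le> r \<Longrightarrow> x \<le> y \<Longrightarrow> enn_powr x r \<le> enn_powr y r"
  unfolding enn_powr_def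
  by (cases x; cases y) (auto intro!: powr_mono2 ennreal_leI simp: top_unique)

lemma enn_powr_strict: "0 < r \<Longrightarrow> x < y \<Longrightarrow> enn_powr x r < enn_powr y r"
  unfolding enn_powr_def
  by (cases x; cases y) (auto intro!: powr_less_mono2 simp: ennreal_less_iff)

lemma enn_powr_le_iff: "0 < r \<Longrightarrow> enn_powr x r \<le> enn_powr y r \<longleftrightarrow> x \<le> y"
  using enn_powr_mono[of r x y] enn_powr_strict[of r y x] by (meson less_imp_le not_le)

lemma enn_powr_less_iff: "0 < r \<Longrightarrow> enn_powr x r < enn_powr y r \<longleftrightarrow> x < y"
  using enn_powr_le_iff[of r y x] by (meson not_le)

lemma enn_powr_dist: "0 < r \<Longrightarrow> finite G \<Longrightarrow> enn_powr (dist_set nrm x G) r = md r G x"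
proof (cases "G = {}")
  case True
  then show ?thesis by (simp add: dist_set_def enn_powr_def)
next
  case False
  assume r: "0 < r" and fin: "finite G"
  obtain g0 where g0: "g0 \<in> G" "\<forall>g\<in>G. nrm (x - g0) \<le> nrm (x - g)"
    using ex_min_if_finite[of "(\<lambda>g. nrm (x - g)) ` G"] fin False
    by (metis (mono_tags, lifting) arg_min_if_finite(1) arg_min_if_finite(2) image_eqI not_less)
  have "dist_set nrm x G = ennreal (nrm (x - g0))"
    unfolding dist_set_def
    by (rule antisym, rule INF_lower2[OF g0(1)], simp, rule INF_greatest, simp add: ennreal_leI g0(2))
  moreover have "md r G x = ennreal (nrm (x - g0) powr r)"
    unfolding md_def
    by (rule antisym, rule INF_lower2[OF g0(1)], simp, rule INF_greatest,
        auto intro!: ennreal_leI powr_mono2 simp: g0(2) nrm_nonneg less_imp_le[OF r])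
  ultimately show ?thesis by (simp add: enn_powr_def nrm_nonneg)
qed

lemma quant_J: "0 < r \<Longrightarrow> finite G \<Longrightarrow> quant_err nrm \<mu> r G = enn_powr (J r G) (1 / r)"
  unfolding quant_err_def J_def by (simp add: enn_powr_dist)

lemma powr_add_le: fixes u v r :: real shows "0 \<le> u \<Longrightarrow> 0 \<le> v \<Longrightarrow> 0 < r \<Longrightarrow> (u + v) powr r \<le> 2 powr r * (u powr r + v powr r)"
proof -
  assume u: "0 \<le> u" and v: "0 \<le> v" and r: "0 < r"
  have "(u + v) powr r \<le> (2 * max u v) powr r" using u v r by (intro powr_mono2) auto
  also have "\<dots> = 2 powr r * max u v powr r" using u v by (simp add: powr_mult)
  also have "max u v powr r \<le> u powr r + v powr r" by (cases "u \<le> v") (auto simp: max_def)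
  hence "2 powr r * max u v powr r \<le> 2 powr r * (u powr r + v powr r)" by simp
  finally show ?thesis .
qed

lemma moment_shift:
  assumes r: "0 < r" and m: "(\<integral>\<^sup>+ x. ennreal (nrm x powr r) \<partial>\<mu>) < \<infinity>"
  shows "(\<integral>\<^sup>+ x. ennreal (nrm (x - b) powr r) \<partial>\<mu>) < \<infinity>"
proof -
  have "(\<integral>\<^sup>+ x. ennreal (nrm (x - b) powr r) \<partial>\<mu>) \<le>
        (\<integral>\<^sup>+ x. ennreal (2 powr r) * (ennreal (nrm x powr r) + ennreal (nrm b powr r)) \<partial>\<mu>)"
  proof (rule nn_integral_mono)
    fix x
    have "nrm (x - b) powr r \<le> (nrm x + nrm (-b)) powr r"
      using nrm_tri[of x "-b"] r by (intro powr_mono2) (auto simp: nrm_nonneg)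
    also have "\<dots> \<le> 2 powr r * (nrm x powr r + nrm (-b) powr r)"
      using r by (intro powr_add_le) (auto simp: nrm_nonneg)
    finally have fin: "nrm (x - b) powr r \<le> 2 powr r * (nrm x powr r + nrm (-b) powr r)" .
    show "ennreal (nrm (x - b) powr r) \<le> ennreal (2 powr r) * (ennreal (nrm x powr r) + ennreal (nrm b powr r))"
    proof -
      have e: "ennreal (2 powr r) * (ennreal (nrm x powr r) + ennreal (nrm b powr r))
           = ennreal (2 powr r * (nrm x powr r + nrm b powr r))"
        by (subst ennreal_plus[symmetric]; simp; subst ennreal_mult; simp)
      show ?thesis unfolding e using fin by (intro ennreal_leI) (simp add: nrm_minus)
    qed
  qed
  also have "\<dots> = ennreal (2 powr r) * ((\<integral>\<^sup>+ x. ennreal (nrm x powr r) \<partial>\<mu>) + ennreal (nrm b powr r))"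
  proof -
    have m1: "(\<lambda>x. ennreal (nrm x powr r)) \<in> borel_measurable \<mu>" unfolding meas_mu by measurable
    have "(\<integral>\<^sup>+ x. ennreal (2 powr r) * (ennreal (nrm x powr r) + ennreal (nrm b powr r)) \<partial>\<mu>)
       = ennreal (2 powr r) * (\<integral>\<^sup>+ x. (ennreal (nrm x powr r) + ennreal (nrm b powr r)) \<partial>\<mu>)"
      using m1 by (intro nn_integral_cmult) auto
    also have "(\<integral>\<^sup>+ x. (ennreal (nrm x powr r) + ennreal (nrm b powr r)) \<partial>\<mu>)
       = (\<integral>\<^sup>+ x. ennreal (nrm x powr r) \<partial>\<mu>) + (\<integral>\<^sup>+ x. ennreal (nrm b powr r) \<partial>\<mu>)"
      using m1 by (intro nn_integral_add) auto
    also have "(\<integral>\<^sup>+ x. ennreal (nrm b powr r) \<partial>\<mu>) = ennreal (nrm b powr r)"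
      using emeasure_UNIV space_mu by simp
    finally show ?thesis .
  qed
  also have "\<dots> < \<infinity>" using m by (simp add: ennreal_mult_less_top)
  finally show ?thesis .
qed


lemma J_fin: assumes r: "0 < r" and m: "(\<integral>\<^sup>+ x. ennreal (nrm x powr r) \<partial>\<mu>) < \<infinity>" and g: "g \<in> G"
  shows "J r G < \<infinity>"
proof -
  have "J r G \<le> (\<integral>\<^sup>+ x. ennreal (nrm (x - g) powr r) \<partial>\<mu>)"
    unfolding J_def by (rule nn_integral_mono) (rule md_le[OF g])
  also have "\<dots> < \<infinity>" by (rule moment_shift[OF r m])
  finally show ?thesis .
qed

lemma ball_sets: "{x. nrm (x - x0) < e} \<in> sets \<mu>"
  unfolding sb by measurable

lemma key_dec:
  assumes r: "0 < r" and d: "0 < \<delta>" and G: "\<forall>g\<in>G. \<delta> \<le> nrm (x0 - g)" and fin: "finite G"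
  shows "J r (G \<union> {x0}) + ennreal ((3*\<delta>/4) powr r - (\<delta>/4) powr r) * emeasure \<mu> {x. nrm (x - x0) < \<delta>/4} \<le> J r G"
proof -
  define B where "B = {x. nrm (x - x0) < \<delta>/4}"
  define \<eta> where "\<eta> = (3*\<delta>/4) powr r - (\<delta>/4) powr r"
  have le34: "(\<delta>/4) powr r \<le> (3*\<delta>/4) powr r" using d r by (intro powr_mono2) auto
  have pw: "md r (G \<union> {x0}) x + ennreal \<eta> * indicator B x \<le> md r G x" for x
  proof (cases "x \<in> B")
    case True
    hence xb: "nrm (x - x0) < \<delta>/4" by (simp add: B_def)
    have "md r (G \<union> {x0}) x \<le> ennreal (nrm (x - x0) powr r)" by (rule md_le) simp
    also have "\<dots> \<le> ennreal ((\<delta>/4) powr r)" using xb r by (intro ennreal_leI powr_mono2) (auto simp: nrm_nonneg)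
    finally have a: "md r (G \<union> {x0}) x \<le> ennreal ((\<delta>/4) powr r)" .
    have b: "ennreal ((3*\<delta>/4) powr r) \<le> md r G x"
      unfolding md_def
    proof (rule INF_greatest)
      fix g assume "g \<in> G"
      hence "\<delta> \<le> nrm (x0 - g)" using G by auto
      moreover have "nrm (x0 - g) \<le> nrm (x0 - x) + nrm (x - g)" by (rule nrm_tri_diff)
      moreover have "nrm (x0 - x) = nrm (x - x0)" by (rule nrm_commute)
      ultimately have "3*\<delta>/4 \<le> nrm (x - g)" using xb by linarith
      thus "ennreal ((3*\<delta>/4) powr r) \<le> ennreal (nrm (x - g) powr r)"
        using d r by (intro ennreal_leI powr_mono2) auto
    qed
    have "md r (G \<union> {x0}) x + ennreal \<eta> * indicator B x \<le> ennreal ((\<delta>/4) powr r) + ennreal \<eta>"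
      using True a by (simp add: add_right_mono)
    also have "\<dots> = ennreal ((3*\<delta>/4) powr r)" unfolding \<eta>_def using le34
      by (subst ennreal_plus[symmetric]) auto
    finally show ?thesis using b by simp
  next
    case False
    have "md r (G \<union> {x0}) x \<le> md r G x" by (rule md_anti) blast
    then show ?thesis using False by simp
  qed
  have "J r (G \<union> {x0}) + ennreal \<eta> * emeasure \<mu> B = (\<integral>\<^sup>+ x. md r (G \<union> {x0}) x + ennreal \<eta> * indicator B x \<partial>\<mu>)"
    unfolding J_def using fin B_def ball_sets[of x0 "\<delta>/4"]
    by (subst nn_integral_add) (auto simp: md_meas_mu nn_integral_cmult_indicator)
  also have "\<dots> \<le> J r G" unfolding J_def by (rule nn_integral_mono) (rule pw)
  finally show ?thesis unfolding \<eta>_def B_def .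
qed

lemma support_pos: "x0 \<in> support \<mu> \<Longrightarrow> open U \<Longrightarrow> x0 \<in> U \<Longrightarrow> 0 < emeasure \<mu> U"
  unfolding support_def by auto

lemma nrm_shift_cont: "continuous_on UNIV (\<lambda>x. nrm (x - x0))"
  by (intro continuous_on_compose2[OF nrm_cont]) (auto intro!: continuous_intros)

lemma support_ball: "x0 \<in> support \<mu> \<Longrightarrow> 0 < e \<Longrightarrow> 0 < emeasure \<mu> {x. nrm (x - x0) < e}"
  by (rule support_pos) (auto intro!: open_Collect_less continuous_intros nrm_shift_cont)

lemma strict_dec:
  assumes r: "0 < r" and fin: "finite G" and x0: "x0 \<in> support \<mu>" "x0 \<notin> G" and JG: "J r G < \<infinity>"
  shows "J r (G \<union> {x0}) < J r G"
proof -
  define \<delta> where "\<delta> = Min (insert 1 ((\<lambda>g. nrm (x0 - g)) ` G))"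
  have "\<forall>a\<in>insert 1 ((\<lambda>g. nrm (x0 - g)) ` G). 0 < a"
  proof
    fix a assume "a \<in> insert 1 ((\<lambda>g. nrm (x0 - g)) ` G)"
    then obtain g where "a = 1 \<or> (g \<in> G \<and> a = nrm (x0 - g))" by auto
    moreover have "g \<in> G \<Longrightarrow> x0 - g \<noteq> 0" using x0(2) by auto
    ultimately show "0 < a" using nrm_pos by auto
  qed
  hence d: "0 < \<delta>" unfolding \<delta>_def using fin by (subst Min_gr_iff) auto
  have G: "\<forall>g\<in>G. \<delta> \<le> nrm (x0 - g)" unfolding \<delta>_def using fin by (auto intro: Min_le)
  have pos: "0 < ennreal ((3*\<delta>/4) powr r - (\<delta>/4) powr r) * emeasure \<mu> {x. nrm (x - x0) < \<delta>/4}"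
  proof -
    have "(\<delta>/4) powr r < (3*\<delta>/4) powr r" using d r by (intro powr_less_mono2) auto
    moreover have "0 < emeasure \<mu> {x. nrm (x - x0) < \<delta>/4}" using d by (intro support_ball x0) simp
    ultimately show ?thesis by (simp add: ennreal_zero_less_mult_iff)
  qed
  define c where "c = ennreal ((3*\<delta>/4) powr r - (\<delta>/4) powr r) * emeasure \<mu> {x. nrm (x - x0) < \<delta>/4}"
  have ac: "J r (G \<union> {x0}) + c \<le> J r G" unfolding c_def
    by (rule key_dec[OF r d G fin])
  have "J r (G \<union> {x0}) \<le> J r G" by (rule J_anti) blast
  hence afin: "J r (G \<union> {x0}) \<noteq> \<infinity>" using JG by auto
  show ?thesis
  proof (rule ccontr)
    assume "\<not> ?thesis"
    hence "J r G \<le> J r (G \<union> {x0})" by simp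
    hence "J r (G \<union> {x0}) + c \<le> J r (G \<union> {x0}) + 0" using ac by (metis add.right_neutral order.trans)
    hence "c \<le> 0" using afin ennreal_add_left_cancel_le by blast
    thus False using pos unfolding c_def by (metis not_le)
  qed
qed

lemma AE_support: "AE x in \<mu>. x \<in> support \<mu>"
proof -
  define F where "F = {U. open U \<and> emeasure \<mu> U = 0}"
  obtain F' where F': "F' \<subseteq> F" "countable F'" "\<Union>F' = \<Union>F"
    using Lindelof[of F] unfolding F_def by auto
  have U: "U \<in> null_sets \<mu>" if "U \<in> F'" for U
  proof -
    have "open U" "emeasure \<mu> U = 0" using that F' unfolding F_def by auto
    moreover have "U \<in> sets \<mu>" using \<open>open U\<close> unfolding sb by auto
    ultimately show ?thesis by auto
  qed
  have "(\<Union>U\<in>F'. U) \<in> null_sets \<mu>" using F'(2) U by (intro null_sets_UN') auto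
  moreover have "{x \<in> space \<mu>. \<not> x \<in> support \<mu>} \<subseteq> (\<Union>U\<in>F'. U)"
  proof
    fix x assume "x \<in> {x \<in> space \<mu>. x \<notin> support \<mu>}"
    then obtain U where "open U" "x \<in> U" "\<not> 0 < emeasure \<mu> U" unfolding support_def by auto
    hence "U \<in> F" unfolding F_def by (auto simp: not_less)
    thus "x \<in> (\<Union>U\<in>F'. U)" using F'(3) \<open>x \<in> U\<close> by auto
  qed
  ultimately show ?thesis by (rule AE_I')
qed

lemma fp_Suc: "first_pts a (Suc N) = first_pts a N \<union> {a (Suc N)}"
  unfolding first_pts_def by (auto simp: atLeastAtMostSuc_conv)
lemma fp_fin: "finite (first_pts a N)" unfolding first_pts_def by simp
lemma fp_0: "first_pts a 0 = {}" unfolding first_pts_def by simp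
lemma fp_1: "1 \<le> N \<Longrightarrow> a 1 \<in> first_pts a N" unfolding first_pts_def by simp
lemma fp_card: "card (first_pts a N) \<le> N" unfolding first_pts_def
  using card_image_le[of "{1..N}" a] by simp
lemma fp_mono: "n \<le> m \<Longrightarrow> first_pts a n \<subseteq> first_pts a m" unfolding first_pts_def by auto

lemma greedyJ:
  assumes g: "greedy_seq nrm \<mu> p a" and p: "0 < p"
  shows "J p (first_pts a N \<union> {a (Suc N)}) \<le> J p (first_pts a N \<union> {\<xi>})"
proof -
  have "quant_err nrm \<mu> p (first_pts a N \<union> {a (Suc N)}) \<le> quant_err nrm \<mu> p (first_pts a N \<union> {\<xi>})"
    using g unfolding greedy_seq_def by blast
  thus ?thesis using p by (simp add: quant_J fp_fin enn_powr_le_iff)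
qed

lemma step_strict:
  assumes g: "greedy_seq nrm \<mu> p a" and p: "0 < p" and m: "(\<integral>\<^sup>+ x. ennreal (nrm x powr p) \<partial>\<mu>) < \<infinity>"
    and k: "1 \<le> k" "k < N" and lc: "le_card N (support \<mu>)"
  shows "J p (first_pts a (Suc k)) < J p (first_pts a k)"
proof -
  have "\<not> support \<mu> \<subseteq> first_pts a k"
  proof
    assume sub: "support \<mu> \<subseteq> first_pts a k"
    hence "finite (support \<mu>)" using fp_fin finite_subset by blast
    hence "N \<le> card (support \<mu>)" using lc unfolding le_card_def by simp
    moreover have "card (support \<mu>) \<le> card (first_pts a k)" using sub fp_fin by (rule card_mono[rotated])
    ultimately show False using fp_card[of a k] k by linarith
  qed
  then obtain x0 where x0: "x0 \<in> support \<mu>" "x0 \<notin> first_pts a k" by blast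
  have "J p (first_pts a (Suc k)) \<le> J p (first_pts a k \<union> {x0})"
    unfolding fp_Suc by (rule greedyJ[OF g p])
  also have "\<dots> < J p (first_pts a k)"
    by (rule strict_dec[OF p fp_fin x0 J_fin[OF p m fp_1[OF k(1)]]])
  finally show ?thesis .
qed

lemma strict_chain:
  assumes g: "greedy_seq nrm \<mu> p a" and p: "0 < p" and m: "(\<integral>\<^sup>+ x. ennreal (nrm x powr p) \<partial>\<mu>) < \<infinity>"
    and lc: "le_card N (support \<mu>)" and nm: "1 \<le> n" "n < k" "k \<le> N"
  shows "J p (first_pts a k) < J p (first_pts a n)"
proof -
  have "J p (first_pts a k) \<le> J p (first_pts a (Suc n))" using nm by (intro J_anti fp_mono) simp
  also have "\<dots> < J p (first_pts a n)" using nm by (intro step_strict[OF g p m _ _ lc]) auto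
  finally show ?thesis .
qed

lemma fp_pred: "1 \<le> N \<Longrightarrow> first_pts a N = first_pts a (N - 1) \<union> {a N}"
  using fp_Suc[of a "N - 1"] by simp

lemma fp_pred_memI: "i \<in> {1..<N} \<Longrightarrow> a i \<in> first_pts a (N - 1)"
  unfolding first_pts_def by auto

lemma fp_pred_memE: "g \<in> first_pts a (N - 1) \<Longrightarrow> \<exists>i\<in>{1..<N}. g = a i"
proof -
  assume "g \<in> first_pts a (N - 1)"
  then obtain i where "i \<in> {1..N-1}" "g = a i" unfolding first_pts_def by auto
  thus ?thesis by (intro bexI[of _ i]) auto
qed

lemma md_out_cell:
  assumes N: "1 \<le> N" and x: "x \<notin> open_cell nrm a N" and r: "0 < r"
  shows "md r (first_pts a N) x = md r (first_pts a (N - 1)) x"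
proof -
  from x have "\<not> (\<forall>i\<in>{1..<N}. nrm (x - a N) < nrm (x - a i))" unfolding open_cell_def by simp
  then obtain i where i: "i \<in> {1..<N}" "nrm (x - a i) \<le> nrm (x - a N)"
    by (auto simp: not_less)
  have "a i \<in> first_pts a (N - 1)" using i(1) by (rule fp_pred_memI)
  hence "md r (first_pts a (N - 1)) x \<le> ennreal (nrm (x - a i) powr r)" by (rule md_le)
  also have "\<dots> \<le> ennreal (nrm (x - a N) powr r)" using i r by (intro ennreal_leI powr_mono2) (auto simp: nrm_nonneg)
  finally have le: "md r (first_pts a (N - 1)) x \<le> ennreal (nrm (x - a N) powr r)" .
  have "md r (first_pts a N) x = min (ennreal (nrm (x - a N) powr r)) (md r (first_pts a (N - 1)) x)"
    unfolding fp_pred[OF N] by (rule md_Un1)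
  also have "\<dots> = md r (first_pts a (N - 1)) x" using le by (rule min_absorb2)
  finally show ?thesis .
qed

lemma md_in_cell:
  assumes N: "1 \<le> N" and x: "x \<in> closed_cell nrm a N" and r: "0 < r"
  shows "md r (first_pts a N) x = ennreal (nrm (x - a N) powr r)"
proof -
  have "ennreal (nrm (x - a N) powr r) \<le> md r (first_pts a (N - 1)) x"
    unfolding md_def
  proof (rule INF_greatest)
    fix g assume "g \<in> first_pts a (N - 1)"
    then obtain i where i: "i \<in> {1..<N}" "g = a i" by (meson fp_pred_memE)
    have "\<forall>i\<in>{1..<N}. nrm (x - a N) \<le> nrm (x - a i)" using x unfolding closed_cell_def by simp
    hence "nrm (x - a N) \<le> nrm (x - g)" using i by simp
    thus "ennreal (nrm (x - a N) powr r) \<le> ennreal (nrm (x - g) powr r)"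
      using r by (intro ennreal_leI powr_mono2) (auto simp: nrm_nonneg)
  qed
  hence le: "ennreal (nrm (x - a N) powr r) \<le> md r (first_pts a (N - 1)) x" .
  have "md r (first_pts a N) x = min (ennreal (nrm (x - a N) powr r)) (md r (first_pts a (N - 1)) x)"
    unfolding fp_pred[OF N] by (rule md_Un1)
  also have "\<dots> = ennreal (nrm (x - a N) powr r)" using le by (rule min_absorb1)
  finally show ?thesis .
qed

lemma open_cell_sets: "open_cell nrm a N \<in> sets \<mu>"
proof -
  have "open_cell nrm a N = (\<Inter>i\<in>{1..<N}. {x. nrm (x - a N) < nrm (x - a i)})"
    unfolding open_cell_def by auto
  moreover have "open (\<Inter>i\<in>{1..<N}. {x. nrm (x - a N) < nrm (x - a i)})"
    by (intro open_INT ballI finite_atLeastLessThan open_Collect_less nrm_shift_cont)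
  ultimately show ?thesis unfolding sb by auto
qed

lemma cell_pos:
  assumes g: "greedy_seq nrm \<mu> p a" and p: "0 < p" and m: "(\<integral>\<^sup>+ x. ennreal (nrm x powr p) \<partial>\<mu>) < \<infinity>"
    and N: "1 \<le> N" and lc: "le_card N (support \<mu>)"
  shows "0 < emeasure \<mu> (open_cell nrm a N)"
proof (cases "N = 1")
  case True
  hence "open_cell nrm a N = UNIV" unfolding open_cell_def by auto
  then show ?thesis using emeasure_UNIV by simp
next
  case False
  show ?thesis
  proof (rule ccontr)
    assume "\<not> ?thesis"
    hence z: "emeasure \<mu> (open_cell nrm a N) = 0" by (simp add: not_less)
    have "AE x in \<mu>. x \<notin> open_cell nrm a N"
      using z open_cell_sets by (intro AE_I'[of "open_cell nrm a N"]) auto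
    hence "AE x in \<mu>. md p (first_pts a N) x = md p (first_pts a (N - 1)) x"
      by (rule eventually_mono) (rule md_out_cell[OF N _ p])
    hence "J p (first_pts a N) = J p (first_pts a (N - 1))"
      unfolding J_def by (rule nn_integral_cong_AE)
    moreover have "J p (first_pts a (Suc (N - 1))) < J p (first_pts a (N - 1))"
      using False N by (intro step_strict[OF g p m _ _ lc]) auto
    ultimately show False using N by simp
  qed
qed

lemma cell_opt:
  assumes g: "greedy_seq nrm \<mu> p a" and p: "0 < p" and m: "(\<integral>\<^sup>+ x. ennreal (nrm x powr p) \<partial>\<mu>) < \<infinity>"
    and N: "1 \<le> N" and C: "C \<in> sets borel" "open_cell nrm a N \<subseteq> C" "C \<subseteq> closed_cell nrm a N"
  shows "cond_exp_set \<mu> (\<lambda>x. ennreal (nrm (x - a N) powr p)) C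
                    \<le> cond_exp_set \<mu> (\<lambda>x. ennreal (nrm (x - b) powr p)) C"
proof -
  define G where "G = first_pts a (N - 1)"
  have finG: "finite G" unfolding G_def by (rule fp_fin)
  define R where "R = (\<integral>\<^sup>+ x. md p G x * indicator (- C) x \<partial>\<mu>)"
  have Cm: "C \<in> sets \<mu>" using C sb by simp
  have "space \<mu> - C \<in> sets \<mu>" using Cm by auto
  hence Cc: "- C \<in> sets \<mu>" unfolding space_mu by (simp add: Compl_eq_Diff_UNIV)
  have mb: "(\<lambda>x. ennreal (nrm (x - b) powr p)) \<in> borel_measurable \<mu>" for b
    unfolding meas_mu by measurable
  have mG: "md p G \<in> borel_measurable \<mu>" using finG by (rule md_meas_mu)
  have eq1: "md p (G \<union> {a N}) x = ennreal (nrm (x - a N) powr p) * indicator C x + md p G x * indicator (- C) x" for x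
  proof (cases "x \<in> C")
    case True
    then show ?thesis using md_in_cell[OF N _ p, of x] C unfolding G_def fp_pred[OF N, symmetric] by auto
  next
    case False
    then show ?thesis using md_out_cell[OF N _ p, of x] C unfolding G_def fp_pred[OF N, symmetric] by auto
  qed
  have le2: "md p (G \<union> {b}) x \<le> ennreal (nrm (x - b) powr p) * indicator C x + md p G x * indicator (- C) x" for x
    unfolding md_Un1 by (cases "x \<in> C") auto
  have I1: "J p (G \<union> {a N}) = (\<integral>\<^sup>+x\<in>C. ennreal (nrm (x - a N) powr p) \<partial>\<mu>) + R"
    unfolding J_def eq1 R_def using mb[of "a N"] mG Cm Cc by (intro nn_integral_add) auto
  have I2: "J p (G \<union> {b}) \<le> (\<integral>\<^sup>+x\<in>C. ennreal (nrm (x - b) powr p) \<partial>\<mu>) + R"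
  proof -
    have "J p (G \<union> {b}) \<le> (\<integral>\<^sup>+x. ennreal (nrm (x - b) powr p) * indicator C x + md p G x * indicator (- C) x \<partial>\<mu>)"
      unfolding J_def by (rule nn_integral_mono) (rule le2)
    also have "\<dots> = (\<integral>\<^sup>+x\<in>C. ennreal (nrm (x - b) powr p) \<partial>\<mu>) + R"
      unfolding R_def using mb[of b] mG Cm Cc by (intro nn_integral_add) auto
    finally show ?thesis .
  qed
  have gr: "J p (G \<union> {a N}) \<le> J p (G \<union> {b})"
    using greedyJ[OF g p, of "N - 1" b] N unfolding G_def by simp
  have Rfin: "R \<noteq> \<infinity>"
  proof (cases "N = 1")
    case True
    hence "C = UNIV" using C unfolding open_cell_def by auto
    then show ?thesis unfolding R_def by simp
  next
    case False
    have "R \<le> J p G" unfolding R_def J_def by (intro nn_integral_mono) (auto simp: indicator_def)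
    also have "\<dots> < \<infinity>" unfolding G_def using False N by (intro J_fin[OF p m fp_1]) auto
    finally show ?thesis by simp
  qed
  have AR: "(\<integral>\<^sup>+x\<in>C. ennreal (nrm (x - a N) powr p) \<partial>\<mu>) + R \<le> (\<integral>\<^sup>+x\<in>C. ennreal (nrm (x - b) powr p) \<partial>\<mu>) + R"
    unfolding I1[symmetric] using gr I2 by (rule order.trans)
  have "(\<integral>\<^sup>+x\<in>C. ennreal (nrm (x - a N) powr p) \<partial>\<mu>) \<le> (\<integral>\<^sup>+x\<in>C. ennreal (nrm (x - b) powr p) \<partial>\<mu>)"
  proof -
    from AR have "R + (\<integral>\<^sup>+x\<in>C. ennreal (nrm (x - a N) powr p) \<partial>\<mu>) \<le> R + (\<integral>\<^sup>+x\<in>C. ennreal (nrm (x - b) powr p) \<partial>\<mu>)"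
      by (simp only: add.commute)
    thus ?thesis using Rfin ennreal_add_left_cancel_le by blast
  qed
  thus ?thesis unfolding cond_exp_set_def divide_ennreal_def by (rule mult_right_mono) simp
qed

lemma far_top:
  assumes r: "0 < r" and k: "\<And>k. real k \<le> nrm (\<xi> k)"
  shows "((\<lambda>k. ennreal (nrm (x - \<xi> k) powr r)) \<longlonglongrightarrow> top)"
  unfolding ennreal_tendsto_top_eq_at_top filterlim_at_top
proof
  fix Z :: real
  define T where "T = (max Z 1) powr (1 / r)"
  have T0: "0 < T" unfolding T_def by simp
  have TZ: "Z \<le> T powr r" unfolding T_def using r by (simp add: powr_powr)
  show "\<forall>\<^sub>F k in sequentially. Z \<le> nrm (x - \<xi> k) powr r"
  proof (rule eventually_sequentiallyI[of "nat \<lceil>T + nrm x\<rceil>"])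
    fix k assume "nat \<lceil>T + nrm x\<rceil> \<le> k"
    hence "T + nrm x \<le> real k" by linarith
    moreover have "nrm (\<xi> k) - nrm x \<le> nrm (x - \<xi> k)" using nrm_rev[of "\<xi> k" x] nrm_commute[of x "\<xi> k"] by simp
    ultimately have "T \<le> nrm (x - \<xi> k)" using k[of k] by linarith
    hence "T powr r \<le> nrm (x - \<xi> k) powr r" using T0 r by (intro powr_mono2) auto
    thus "Z \<le> nrm (x - \<xi> k) powr r" using TZ by linarith
  qed
qed

lemma md_far:
  assumes r: "0 < r" and k: "\<And>k. real k \<le> nrm (\<xi> k)"
  shows "(\<lambda>k. md r (G \<union> {\<xi> k}) x) \<longlonglongrightarrow> md r G x"
proof -
  have "(\<lambda>k. min (ennreal (nrm (x - \<xi> k) powr r)) (md r G x)) \<longlonglongrightarrow> min top (md r G x)"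
    by (intro tendsto_min far_top[OF r k] tendsto_const)
  thus ?thesis unfolding md_Un1 by simp
qed

lemma md_conv:
  assumes r: "0 < r" and l: "\<xi> \<longlonglongrightarrow> l"
  shows "(\<lambda>k. md r (G \<union> {\<xi> k}) x) \<longlonglongrightarrow> md r (G \<union> {l}) x"
proof -
  have "(\<lambda>k. nrm (x - \<xi> k)) \<longlonglongrightarrow> nrm (x - l)"
    by (intro isCont_tendsto_compose[OF nrm_isCont] tendsto_diff tendsto_const l)
  hence "(\<lambda>k. nrm (x - \<xi> k) powr r) \<longlonglongrightarrow> nrm (x - l) powr r"
    using r by (intro tendsto_powr') (auto simp: nrm_nonneg)
  hence "(\<lambda>k. min (ennreal (nrm (x - \<xi> k) powr r)) (md r G x)) \<longlonglongrightarrow> min (ennreal (nrm (x - l) powr r)) (md r G x)"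
    by (intro tendsto_min tendsto_ennrealI tendsto_const)
  thus ?thesis unfolding md_Un1 .
qed

lemma fatou_md:
  assumes fin: "finite G" and lim: "\<And>x. (\<lambda>k. md r (G \<union> {\<xi> k}) x) \<longlonglongrightarrow> f x"
  shows "(\<integral>\<^sup>+ x. f x \<partial>\<mu>) \<le> liminf (\<lambda>k. J r (G \<union> {\<xi> k}))"
proof -
  have "(\<integral>\<^sup>+ x. f x \<partial>\<mu>) = (\<integral>\<^sup>+ x. liminf (\<lambda>k. md r (G \<union> {\<xi> k}) x) \<partial>\<mu>)"
    by (intro nn_integral_cong lim_imp_Liminf[symmetric] lim) simp
  also have "\<dots> \<le> liminf (\<lambda>k. J r (G \<union> {\<xi> k}))"
    unfolding J_def using fin by (intro nn_integral_liminf md_meas_mu) simp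
  finally show ?thesis .
qed

lemma J_empty: "J r {} = \<infinity>"
proof -
  have "md r {} = (\<lambda>x. \<infinity>)" by (rule ext) simp
  thus ?thesis unfolding J_def using emeasure_UNIV space_mu by simp
qed

lemma coercive:
  assumes r: "0 < r" and fin: "finite G" and c: "c < J r G"
  shows "\<exists>R. \<forall>\<xi>. R \<le> nrm \<xi> \<longrightarrow> c < J r (G \<union> {\<xi>})"
proof (rule ccontr)
  assume "\<not> ?thesis"
  hence "\<forall>R. \<exists>\<xi>. R \<le> nrm \<xi> \<and> J r (G \<union> {\<xi>}) \<le> c" by (auto simp: not_less)
  hence "\<forall>k::nat. \<exists>\<xi>. real k \<le> nrm \<xi> \<and> J r (G \<union> {\<xi>}) \<le> c" by blast
  then obtain \<xi> where "\<forall>k::nat. real k \<le> nrm (\<xi> k) \<and> J r (G \<union> {\<xi> k}) \<le> c"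
    using choice[of "\<lambda>k \<xi>. real k \<le> nrm \<xi> \<and> J r (G \<union> {\<xi>}) \<le> c"] by blast
  hence \<xi>: "\<And>k. real k \<le> nrm (\<xi> k)" "\<And>k. J r (G \<union> {\<xi> k}) \<le> c" by auto
  have "J r G \<le> liminf (\<lambda>k. J r (G \<union> {\<xi> k}))"
    using fatou_md[OF fin md_far[OF r \<xi>(1)]] by (simp only: J_def)
  also have "\<dots> \<le> c" using \<xi>(2) by (intro Liminf_le) auto
  finally show False using c by simp
qed

lemma exists_min:
  assumes r: "0 < r" and fin: "finite G" and m: "(\<integral>\<^sup>+ x. ennreal (nrm x powr r) \<partial>\<mu>) < \<infinity>"
  shows "\<exists>\<xi>. \<forall>\<eta>. J r (G \<union> {\<xi>}) \<le> J r (G \<union> {\<eta>})"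
proof (cases "\<forall>\<eta>. J r G \<le> J r (G \<union> {\<eta>})")
  case True
  have "G \<noteq> {}"
  proof
    assume "G = {}"
    hence "J r G = \<infinity>" by (simp add: J_empty)
    moreover have "J r (G \<union> {0}) < \<infinity>" using fin by (intro J_fin[OF r m]) auto
    ultimately show False using True by (metis not_le)
  qed
  then obtain g where g: "g \<in> G" by blast
  hence "G \<union> {g} = G" by blast
  thus ?thesis using True by metis
next
  case False
  then obtain \<xi>1 where \<xi>1: "J r (G \<union> {\<xi>1}) < J r G" by (auto simp: not_le)
  obtain R where R: "\<And>\<xi>. R \<le> nrm \<xi> \<Longrightarrow> J r (G \<union> {\<xi>1}) < J r (G \<union> {\<xi>})"
    using coercive[OF r fin \<xi>1] by blast
  define K where "K = {\<xi>. nrm \<xi> \<le> R}"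
  have "\<not> R \<le> nrm \<xi>1" using R[of \<xi>1] by auto
  hence \<xi>1K: "\<xi>1 \<in> K" unfolding K_def by simp
  obtain c0 where c0: "0 < c0" "\<And>x. c0 * norm x \<le> nrm x" using nrm_lower by blast
  have "bounded K" unfolding bounded_iff
  proof (intro exI ballI)
    fix x assume "x \<in> K"
    hence "c0 * norm x \<le> R" using c0(2)[of x] unfolding K_def by simp
    thus "norm x \<le> R / c0" using c0(1) by (simp add: field_simps mult.commute)
  qed
  moreover have "closed K" unfolding K_def
    by (intro closed_Collect_le nrm_cont continuous_on_const)
  ultimately have "compact K" by (simp add: compact_eq_bounded_closed)
  hence sc: "seq_compact K" by (rule compact_imp_seq_compact)
  define A where "A = (\<lambda>\<xi>. J r (G \<union> {\<xi>})) ` K"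
  have "A \<noteq> {}" using \<xi>1K unfolding A_def by blast
  then obtain u where u: "\<And>n. u n \<in> A" "u \<longlonglongrightarrow> Inf A" using Inf_as_limit by blast
  have "\<forall>n. \<exists>\<zeta>. \<zeta> \<in> K \<and> u n = J r (G \<union> {\<zeta>})" using u(1) unfolding A_def by blast
  then obtain \<zeta> where \<zeta>: "\<And>n. \<zeta> n \<in> K" "\<And>n. u n = J r (G \<union> {\<zeta> n})" by metis
  obtain l s where ls: "l \<in> K" "strict_mono s" "(\<zeta> \<circ> s) \<longlonglongrightarrow> l"
    using sc \<zeta>(1) unfolding seq_compact_def by metis
  have "J r (G \<union> {l}) \<le> liminf (\<lambda>k. J r (G \<union> {(\<zeta> \<circ> s) k}))"
    using fatou_md[OF fin md_conv[OF r ls(3)]] by (simp only: J_def)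
  also have "liminf (\<lambda>k. J r (G \<union> {(\<zeta> \<circ> s) k})) = Inf A"
  proof -
    have "(u \<circ> s) \<longlonglongrightarrow> Inf A" using u(2) ls(2) by (rule LIMSEQ_subseq_LIMSEQ)
    moreover have "(\<lambda>k. J r (G \<union> {(\<zeta> \<circ> s) k})) = u \<circ> s" using \<zeta>(2) by (auto simp: fun_eq_iff)
    ultimately show ?thesis by (metis lim_imp_Liminf sequentially_bot)
  qed
  finally have lA: "J r (G \<union> {l}) \<le> Inf A" .
  show ?thesis
  proof (intro exI allI)
    fix \<eta>
    show "J r (G \<union> {l}) \<le> J r (G \<union> {\<eta>})"
    proof (cases "\<eta> \<in> K")
      case True
      hence "Inf A \<le> J r (G \<union> {\<eta>})" unfolding A_def by (auto intro: Inf_lower)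
      then show ?thesis using lA by simp
    next
      case False
      hence "J r (G \<union> {\<xi>1}) < J r (G \<union> {\<eta>})" using R unfolding K_def by simp
      moreover have "Inf A \<le> J r (G \<union> {\<xi>1})" using \<xi>1K unfolding A_def by (auto intro: Inf_lower)
      ultimately show ?thesis using lA by simp
    qed
  qed
qed

lemma ennreal_small:
  assumes "0 < (u::ennreal)" obtains e where "0 < e" "ennreal e < u"
proof -
  obtain y where y: "0 < y" "y < u" using assms dense by blast
  have "y \<noteq> top" using y(2) top.not_eq_extremum by fastforce
  then obtain e where e: "y = ennreal e" "0 \<le> e" by (cases y) auto
  hence "0 < e" using y(1) by simp
  thus ?thesis using that y e by auto
qed

lemma approach:
  assumes g: "greedy_seq nrm \<mu> p a" and p: "0 < p" and m: "(\<integral>\<^sup>+ x. ennreal (nrm x powr p) \<partial>\<mu>) < \<infinity>"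
    and x0: "x0 \<in> support \<mu>" and d: "0 < \<delta>"
  shows "\<exists>N. \<exists>g\<in>first_pts a N. nrm (x0 - g) < \<delta>"
proof (rule ccontr)
  assume "\<not> ?thesis"
  hence far: "\<And>N. \<forall>g\<in>first_pts a N. \<delta> \<le> nrm (x0 - g)" by (auto simp: not_less)
  define c where "c = ennreal ((3*\<delta>/4) powr p - (\<delta>/4) powr p) * emeasure \<mu> {x. nrm (x - x0) < \<delta>/4}"
  have cpos: "0 < c"
  proof -
    have "(\<delta>/4) powr p < (3*\<delta>/4) powr p" using d p by (intro powr_less_mono2) auto
    moreover have "0 < emeasure \<mu> {x. nrm (x - x0) < \<delta>/4}" using d by (intro support_ball x0) simp
    ultimately show ?thesis unfolding c_def by (simp add: ennreal_zero_less_mult_iff)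
  qed
  have step: "J p (first_pts a (Suc N)) + c \<le> J p (first_pts a N)" for N
  proof -
    have "J p (first_pts a (Suc N)) \<le> J p (first_pts a N \<union> {x0})"
      unfolding fp_Suc by (rule greedyJ[OF g p])
    hence "J p (first_pts a (Suc N)) + c \<le> J p (first_pts a N \<union> {x0}) + c" by (rule add_right_mono)
    also have "\<dots> \<le> J p (first_pts a N)" unfolding c_def by (rule key_dec[OF p d far fp_fin])
    finally show ?thesis .
  qed
  have chain: "J p (first_pts a (Suc n)) + of_nat n * c \<le> J p (first_pts a 1)" for n
  proof (induction n)
    case 0
    then show ?case by simp
  next
    case (Suc n)
    have "J p (first_pts a (Suc (Suc n))) + of_nat (Suc n) * c
          = (J p (first_pts a (Suc (Suc n))) + c) + of_nat n * c"
      by (simp only: of_nat_Suc distrib_right mult_1 add.assoc)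
    also have "\<dots> \<le> J p (first_pts a (Suc n)) + of_nat n * c" using step by (rule add_right_mono)
    also have "\<dots> \<le> J p (first_pts a 1)" by (rule Suc.IH)
    finally show ?case .
  qed
  have J1: "J p (first_pts a 1) < \<infinity>" by (rule J_fin[OF p m fp_1]) simp
  obtain e where e: "0 < e" "ennreal e < c" using cpos by (rule ennreal_small)
  obtain j where j: "J p (first_pts a 1) = ennreal j" "0 \<le> j" using J1
    by (cases "J p (first_pts a 1)") auto
  obtain n :: nat where n: "j / e < real n" using reals_Archimedean2 by blast
  hence "j < real n * e" using e by (simp add: field_simps)
  hence "ennreal j < ennreal (real n * e)" using e j(2) by (subst ennreal_less_iff) auto
  also have "ennreal (real n * e) = of_nat n * ennreal e"
    using e by (subst ennreal_mult) (auto simp: ennreal_of_nat_eq_real_of_nat)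
  also have "\<dots> \<le> of_nat n * c" using e by (intro mult_left_mono) auto
  also have "\<dots> \<le> J p (first_pts a (Suc n)) + of_nat n * c" by simp
  also have "\<dots> \<le> J p (first_pts a 1)" by (rule chain)
  finally show False using j by simp
qed

lemma md_to_0:
  assumes g: "greedy_seq nrm \<mu> p a" and p: "0 < p" and m: "(\<integral>\<^sup>+ x. ennreal (nrm x powr p) \<partial>\<mu>) < \<infinity>"
    and x0: "x0 \<in> support \<mu>" and r: "0 < r"
  shows "(\<lambda>N. md r (first_pts a N) x0) \<longlonglongrightarrow> 0"
  unfolding order_tendsto_iff
proof (intro conjI allI impI)
  fix u :: ennreal assume "0 < u"
  then obtain e where e: "0 < e" "ennreal e < u" by (rule ennreal_small)
  define \<delta> where "\<delta> = e powr (1 / r)"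
  have d: "0 < \<delta>" unfolding \<delta>_def using e by simp
  have de: "\<delta> powr r = e" unfolding \<delta>_def using e r by (simp add: powr_powr)
  obtain N0 g where g0: "g \<in> first_pts a N0" "nrm (x0 - g) < \<delta>" using approach[OF g p m x0 d] by blast
  show "\<forall>\<^sub>F N in sequentially. md r (first_pts a N) x0 < u"
  proof (rule eventually_sequentiallyI[of N0])
    fix N assume "N0 \<le> N"
    hence "first_pts a N0 \<subseteq> first_pts a N" by (rule fp_mono)
    hence "g \<in> first_pts a N" using g0(1) by (rule subsetD)
    hence "md r (first_pts a N) x0 \<le> ennreal (nrm (x0 - g) powr r)" by (rule md_le)
    also have "\<dots> < ennreal e"
    proof -
      have "nrm (x0 - g) powr r < \<delta> powr r" using g0 r by (intro powr_less_mono2) (auto simp: nrm_nonneg)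
      hence "nrm (x0 - g) powr r < e" using de by simp
      thus ?thesis by (subst ennreal_less_iff) auto
    qed
    finally show "md r (first_pts a N) x0 < u" using e(2) by (rule order.strict_trans)
  qed
qed simp

lemma enn_powr_tendsto0:
  assumes r: "0 < r" and f: "f \<longlonglongrightarrow> 0"
  shows "(\<lambda>n. enn_powr (f n) r) \<longlonglongrightarrow> 0"
  unfolding order_tendsto_iff
proof (intro conjI allI impI)
  fix u :: ennreal assume "0 < u"
  then obtain e where e: "0 < e" "ennreal e < u" by (rule ennreal_small)
  have "0 < ennreal (e powr (1/r))" using e by simp
  hence "\<forall>\<^sub>F n in sequentially. f n < ennreal (e powr (1/r))" using f unfolding order_tendsto_iff by blast
  thus "\<forall>\<^sub>F n in sequentially. enn_powr (f n) r < u"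
  proof (rule eventually_mono)
    fix n assume fn: "f n < ennreal (e powr (1/r))"
    then obtain t where t: "f n = ennreal t" "0 \<le> t" by (cases "f n") auto
    have "ennreal t < ennreal (e powr (1/r))" using fn t(1) by simp
    hence "t < e powr (1/r)" using t(2) by (subst (asm) ennreal_less_iff) auto
    hence "t powr r < (e powr (1/r)) powr r" using t r by (intro powr_less_mono2) auto
    also have "\<dots> = e" using e r by (simp add: powr_powr)
    finally have te: "t powr r < e" .
    have "enn_powr (f n) r = ennreal (t powr r)" using t by (simp add: enn_powr_def)
    also have "\<dots> < ennreal e" using te by (subst ennreal_less_iff) auto
    finally show "enn_powr (f n) r < u" using e(2) by (rule order.strict_trans)
  qed
qed simp

lemma part_c:
  assumes g: "greedy_seq nrm \<mu> p a" and p: "0 < p" and m: "(\<integral>\<^sup>+ x. ennreal (nrm x powr p) \<partial>\<mu>) < \<infinity>"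
    and q: "p \<le> q" and mq: "(\<integral>\<^sup>+ x. ennreal (nrm x powr q) \<partial>\<mu>) < \<infinity>"
  shows "(\<lambda>N. J q (first_pts a N)) \<longlonglongrightarrow> 0"
proof -
  have q0: "0 < q" using p q by simp
  define f where "f i = md q (first_pts a (Suc i))" for i
  have decx: "f (Suc i) x \<le> f i x" for i x unfolding f_def by (intro md_anti fp_mono) simp
  have dec: "decseq f" by (intro decseq_SucI le_funI decx)
  have fm: "f i \<in> borel_measurable \<mu>" for i unfolding f_def by (rule md_meas_mu[OF fp_fin])
  have f0: "(\<integral>\<^sup>+ x. f 0 x \<partial>\<mu>) < \<infinity>" unfolding f_def using J_fin[OF q0 mq fp_1[of 1 a]] by (simp add: J_def)
  have "(\<integral>\<^sup>+ x. (INF i. f i x) \<partial>\<mu>) = (INF i. integral\<^sup>N \<mu> (f i))"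
    by (rule nn_integral_monotone_convergence_INF_decseq[OF dec fm f0])
  moreover have "(\<integral>\<^sup>+ x. (INF i. f i x) \<partial>\<mu>) = 0"
  proof -
    have "AE x in \<mu>. (INF i. f i x) = 0"
      using AE_support
    proof (rule eventually_mono)
      fix x assume x: "x \<in> support \<mu>"
      have "(\<lambda>i. f i x) \<longlonglongrightarrow> 0" unfolding f_def
        using md_to_0[OF g p m x q0] by (rule LIMSEQ_Suc)
      moreover have "(\<lambda>i. f i x) \<longlonglongrightarrow> (INF i. f i x)"
        by (intro LIMSEQ_INF decseq_SucI decx)
      ultimately show "(INF i. f i x) = 0" using LIMSEQ_unique by blast
    qed
    hence "(\<integral>\<^sup>+ x. (INF i. f i x) \<partial>\<mu>) = (\<integral>\<^sup>+ x. 0 \<partial>\<mu>)" by (rule nn_integral_cong_AE)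
    thus ?thesis by simp
  qed
  ultimately have I0: "(INF i. integral\<^sup>N \<mu> (f i)) = 0" by simp
  have "(\<lambda>i. integral\<^sup>N \<mu> (f i)) \<longlonglongrightarrow> (INF i. integral\<^sup>N \<mu> (f i))"
    by (intro LIMSEQ_INF decseq_SucI nn_integral_mono decx)
  hence "(\<lambda>i. J q (first_pts a (Suc i))) \<longlonglongrightarrow> 0" using I0 unfolding f_def J_def by simp
  thus ?thesis by (rule LIMSEQ_imp_Suc)
qed

lemma exists_greedy:
  assumes p: "0 < p" and m: "(\<integral>\<^sup>+ x. ennreal (nrm x powr p) \<partial>\<mu>) < \<infinity>"
  shows "\<exists>a. greedy_seq nrm \<mu> p a"
proof -
  define pk where "pk G = (SOME \<xi>. \<forall>\<eta>. J p (G \<union> {\<xi>}) \<le> J p (G \<union> {\<eta>}))" for G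
  define a where "a n = pk (Gs pk (n - 1))" for n
  have fpG: "first_pts a N = Gs pk N" for N
  proof (induction N)
    case 0
    then show ?case by (simp add: fp_0)
  next
    case (Suc N)
    then show ?case by (simp add: fp_Suc a_def)
  qed
  have "greedy_seq nrm \<mu> p a" unfolding greedy_seq_def
  proof (intro allI)
    fix N \<xi>
    have "\<exists>\<xi>. \<forall>\<eta>. J p (Gs pk N \<union> {\<xi>}) \<le> J p (Gs pk N \<union> {\<eta>})" by (rule exists_min[OF p Gs_fin m])
    hence "\<forall>\<eta>. J p (Gs pk N \<union> {pk (Gs pk N)}) \<le> J p (Gs pk N \<union> {\<eta>})" unfolding pk_def by (rule someI_ex)
    hence "J p (first_pts a N \<union> {a (Suc N)}) \<le> J p (first_pts a N \<union> {\<xi>})" by (simp add: fpG a_def)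
    thus "quant_err nrm \<mu> p (first_pts a N \<union> {a (Suc N)}) \<le> quant_err nrm \<mu> p (first_pts a N \<union> {\<xi>})"
      using p by (simp add: quant_J fp_fin enn_powr_le_iff)
  qed
  thus ?thesis by blast
qed

lemma first_median:
  assumes g: "greedy_seq nrm \<mu> p a" and p: "0 < p"
  shows "(\<integral>\<^sup>+ x. ennreal (nrm (x - a 1) powr p) \<partial>\<mu>) \<le> (\<integral>\<^sup>+ x. ennreal (nrm (x - \<xi>) powr p) \<partial>\<mu>)"
proof -
  have "J p (first_pts a 0 \<union> {a (Suc 0)}) \<le> J p (first_pts a 0 \<union> {\<xi>})" by (rule greedyJ[OF g p])
  moreover have "md p {g} = (\<lambda>x. ennreal (nrm (x - g) powr p))" for g by (rule ext) (rule md_single)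
  ultimately show ?thesis unfolding J_def fp_0 by simp
qed

lemma not_repeat:
  assumes g: "greedy_seq nrm \<mu> p a" and p: "0 < p" and m: "(\<integral>\<^sup>+ x. ennreal (nrm x powr p) \<partial>\<mu>) < \<infinity>"
    and lc: "le_card N (support \<mu>)" and n: "n \<in> {1..N}"
  shows "a n \<notin> first_pts a (n - 1)"
proof
  assume an: "a n \<in> first_pts a (n - 1)"
  show False
  proof (cases "n = 1")
    case True
    then show False using an by (simp add: fp_0)
  next
    case False
    have "first_pts a n = first_pts a (n - 1) \<union> {a n}" using n by (intro fp_pred) simp
    also have "\<dots> = first_pts a (n - 1)" using an by blast
    finally have eq: "first_pts a n = first_pts a (n - 1)" .
    have "J p (first_pts a n) < J p (first_pts a (n - 1))"
      using n False by (intro strict_chain[OF g p m lc]) auto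
    thus False using eq by simp
  qed
qed

end


theorem proposition2p1:
  fixes nrm :: "'a::euclidean_space \<Rightarrow> real"
    and \<mu> :: "'a measure"
    and p :: real
  assumes norm: "is_norm nrm"
    and prob: "prob_space \<mu>"
    and borel: "sets \<mu> = sets borel"
    and p_pos: "0 < p"
    and mom_p: "(\<integral>\<^sup>+ x. ennreal (nrm x powr p) \<partial>\<mu>) < \<infinity>"
  shows
    \<comment> \<open>(a) existence\<close>
    "(\<exists>a. greedy_seq nrm \<mu> p a)
     \<and> (\<forall>a. greedy_seq nrm \<mu> p a \<longrightarrow>
          (\<forall>\<xi>. (\<integral>\<^sup>+ x. ennreal (nrm (x - a 1) powr p) \<partial>\<mu>) \<le> (\<integral>\<^sup>+ x. ennreal (nrm (x - \<xi>) powr p) \<partial>\<mu>)))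
     \<and> (\<forall>a N. greedy_seq nrm \<mu> p a \<longrightarrow> le_card N (support \<mu>) \<longrightarrow>
          (\<forall>n m. 1 \<le> n \<longrightarrow> n < m \<longrightarrow> m \<le> N \<longrightarrow>
              quant_err nrm \<mu> p (first_pts a m) < quant_err nrm \<mu> p (first_pts a n))
          \<and> (\<forall>n\<in>{1..N}. a n \<notin> first_pts a (n - 1)))
     \<comment> \<open>(b) local optimality\<close>
     \<and> (\<forall>a N. greedy_seq nrm \<mu> p a \<longrightarrow> 1 \<le> N \<longrightarrow> le_card N (support \<mu>) \<longrightarrow>
          emeasure \<mu> (open_cell nrm a N) > 0
          \<and> (\<forall>C. C \<in> sets borel \<longrightarrow> open_cell nrm a N \<subseteq> C \<longrightarrow> C \<subseteq> closed_cell nrm a N \<longrightarrow>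
               (\<forall>b. cond_exp_set \<mu> (\<lambda>x. ennreal (nrm (x - a N) powr p)) C
                    \<le> cond_exp_set \<mu> (\<lambda>x. ennreal (nrm (x - b) powr p)) C)))
     \<comment> \<open>(c) space filling\<close>
     \<and> (\<forall>q a. p \<le> q \<longrightarrow> (\<integral>\<^sup>+ x. ennreal (nrm x powr q) \<partial>\<mu>) < \<infinity> \<longrightarrow> greedy_seq nrm \<mu> p a \<longrightarrow>
          ((\<lambda>N. quant_err nrm \<mu> q (first_pts a N)) \<longlonglongrightarrow> 0)
          \<and> ((\<lambda>N. \<integral>\<^sup>+ \<xi>. (INF i\<in>{1..N}. ennreal (nrm (\<xi> - a i) powr q)) \<partial>\<mu>) \<longlonglongrightarrow> 0)
          \<and> ((\<lambda>N. quant_err nrm \<mu> p (first_pts a N)) \<longlonglongrightarrow> 0))"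
proof -
  interpret qs nrm \<mu> by (rule qs.intro[OF norm prob borel])
  have p1: "0 < 1 / p" using p_pos by simp
  have A1: "\<exists>a. greedy_seq nrm \<mu> p a" by (rule exists_greedy[OF p_pos mom_p])
  have A2: "\<forall>a. greedy_seq nrm \<mu> p a \<longrightarrow>
          (\<forall>\<xi>. (\<integral>\<^sup>+ x. ennreal (nrm (x - a 1) powr p) \<partial>\<mu>) \<le> (\<integral>\<^sup>+ x. ennreal (nrm (x - \<xi>) powr p) \<partial>\<mu>))"
    using first_median[OF _ p_pos] by blast
  have A3: "\<forall>a N. greedy_seq nrm \<mu> p a \<longrightarrow> le_card N (support \<mu>) \<longrightarrow>
          (\<forall>n m. 1 \<le> n \<longrightarrow> n < m \<longrightarrow> m \<le> N \<longrightarrow>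
              quant_err nrm \<mu> p (first_pts a m) < quant_err nrm \<mu> p (first_pts a n))
          \<and> (\<forall>n\<in>{1..N}. a n \<notin> first_pts a (n - 1))"
  proof (intro allI impI conjI ballI)
    fix a N n m assume g: "greedy_seq nrm \<mu> p a" and lc: "le_card N (support \<mu>)"
      and nm: "1 \<le> n" "n < m" "m \<le> N"
    have "J p (first_pts a m) < J p (first_pts a n)" by (rule strict_chain[OF g p_pos mom_p lc nm])
    thus "quant_err nrm \<mu> p (first_pts a m) < quant_err nrm \<mu> p (first_pts a n)"
      using p1 p_pos by (simp add: quant_J fp_fin enn_powr_less_iff)
  next
    fix a N n assume g: "greedy_seq nrm \<mu> p a" and lc: "le_card N (support \<mu>)" and n: "n \<in> {1..N}"
    show "a n \<notin> first_pts a (n - 1)" by (rule not_repeat[OF g p_pos mom_p lc n])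
  qed
  have B: "\<forall>a N. greedy_seq nrm \<mu> p a \<longrightarrow> 1 \<le> N \<longrightarrow> le_card N (support \<mu>) \<longrightarrow>
          emeasure \<mu> (open_cell nrm a N) > 0
          \<and> (\<forall>C. C \<in> sets borel \<longrightarrow> open_cell nrm a N \<subseteq> C \<longrightarrow> C \<subseteq> closed_cell nrm a N \<longrightarrow>
               (\<forall>b. cond_exp_set \<mu> (\<lambda>x. ennreal (nrm (x - a N) powr p)) C
                    \<le> cond_exp_set \<mu> (\<lambda>x. ennreal (nrm (x - b) powr p)) C))"
  proof (intro allI impI conjI)
    fix a N assume g: "greedy_seq nrm \<mu> p a" and N: "1 \<le> N" and lc: "le_card N (support \<mu>)"
    show "emeasure \<mu> (open_cell nrm a N) > 0" by (rule cell_pos[OF g p_pos mom_p N lc])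
    fix C b assume C: "C \<in> sets borel" "open_cell nrm a N \<subseteq> C" "C \<subseteq> closed_cell nrm a N"
    show "cond_exp_set \<mu> (\<lambda>x. ennreal (nrm (x - a N) powr p)) C
                    \<le> cond_exp_set \<mu> (\<lambda>x. ennreal (nrm (x - b) powr p)) C"
      by (rule cell_opt[OF g p_pos mom_p N C])
  qed
  have Cc: "\<forall>q a. p \<le> q \<longrightarrow> (\<integral>\<^sup>+ x. ennreal (nrm x powr q) \<partial>\<mu>) < \<infinity> \<longrightarrow> greedy_seq nrm \<mu> p a \<longrightarrow>
          ((\<lambda>N. quant_err nrm \<mu> q (first_pts a N)) \<longlonglongrightarrow> 0)
          \<and> ((\<lambda>N. \<integral>\<^sup>+ \<xi>. (INF i\<in>{1..N}. ennreal (nrm (\<xi> - a i) powr q)) \<partial>\<mu>) \<longlonglongrightarrow> 0)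
          \<and> ((\<lambda>N. quant_err nrm \<mu> p (first_pts a N)) \<longlonglongrightarrow> 0)"
  proof (intro allI impI conjI)
    fix q a assume q: "p \<le> q" and mq: "(\<integral>\<^sup>+ x. ennreal (nrm x powr q) \<partial>\<mu>) < \<infinity>" and g: "greedy_seq nrm \<mu> p a"
    have q0: "0 < q" using q p_pos by simp
    have Jq: "(\<lambda>N. J q (first_pts a N)) \<longlonglongrightarrow> 0" by (rule part_c[OF g p_pos mom_p q mq])
    have Jp: "(\<lambda>N. J p (first_pts a N)) \<longlonglongrightarrow> 0" by (rule part_c[OF g p_pos mom_p order.refl mom_p])
    have "(\<lambda>N. enn_powr (J q (first_pts a N)) (1 / q)) \<longlonglongrightarrow> 0"
      using q0 by (intro enn_powr_tendsto0 Jq) simp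
    thus "(\<lambda>N. quant_err nrm \<mu> q (first_pts a N)) \<longlonglongrightarrow> 0"
      using q0 by (simp add: quant_J fp_fin)
    have "(\<lambda>N. enn_powr (J p (first_pts a N)) (1 / p)) \<longlonglongrightarrow> 0"
      using p1 by (intro enn_powr_tendsto0 Jp)
    thus "(\<lambda>N. quant_err nrm \<mu> p (first_pts a N)) \<longlonglongrightarrow> 0"
      using p_pos by (simp add: quant_J fp_fin)
    have eqI: "(\<integral>\<^sup>+ \<xi>. (INF i\<in>{1..N}. ennreal (nrm (\<xi> - a i) powr q)) \<partial>\<mu>) = J q (first_pts a N)" for N
      unfolding J_def md_def first_pts_def by (simp add: image_image)
    show "(\<lambda>N. \<integral>\<^sup>+ \<xi>. (INF i\<in>{1..N}. ennreal (nrm (\<xi> - a i) powr q)) \<partial>\<mu>) \<longlonglongrightarrow> 0"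
      unfolding eqI by (rule Jq)
  qed
  show ?thesis using A1 A2 A3 B Cc by blast
qed

end
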